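(* Let $m\ge1$ and let $p,q$ be generic. For a partition $\lambda$ with at most $m$ parts, set $$J_\lambda(u)=\frac{1}{\Delta(u)}\sum_{w\in S_m}\varepsilon(w)\,w\Big[f_{\lambda_1+m-1}(u_1)f_{\lambda_2+m-2}(u_2)\cdots f_{\lambda_m}(u_m)\Big].$$ Then $$\Big(\sum_{i=1}^mu_i\Big)J_\lambda=\sum_{i}J_{\lambda+\varepsilon_i}+\Big(\sum_{i=1}^{l(\lambda)}a(\lambda_i+m-i)+p+\frac{p(p+2q+1)}{2m-2l(\lambda)-p-2q-1}\Big)J_\lambda+\sum_{i}b(\lambda_i+m-i)\,J_{\lambda-\varepsilon_i},$$ where: - the first sum is over $i$ with $\lambda+\varepsilon_i$ a partition with at most $m$ parts; - the last sum is over $i$ with $\lambda-\varepsilon_i$ a partition; - $\lambda\pm\varepsilon_i$ means $\lambda$ with $\lambda_i$ replaced by $\lambda_i\pm1$; - $l(\lambda)$ is the number of nonzero parts of $\lambda$.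
   Context: Here $\Delta(u)=\prod_{i<j}(u_i-u_j)$ and $\varepsilon$ is the sign character of $S_m$, which permutes $u_1,\dots,u_m$. $f_l(z)=\sum_{i=0}^lC_{l,i}(z-2)^i$, where $C_{l,l}=1$ and, for $i<l$, $$C_{l,i}=4^{l-i}\frac{(i+1)\cdots l}{(l-i)!}\cdot\frac{\prod_{r=i+1}^{l}(r-p-q-\frac12)}{\prod_{r=l+i}^{2l-1}(r-p-2q)}.$$ These are monic normalized Jacobi polynomials and satisfy the three-term recurrence $zf_l=f_{l+1}+a(l)f_l+b(l)f_{l-1}$ (with $f_{-1}=0$), where $$a(x)=-\frac{2p(p+2q+1)}{(2x-p-2q-1)(2x-p-2q+1)},\qquad b(x)=\frac{2x(2x-2q-1)(2x-2p-2q-1)(2x-2p-4q-2)}{(2x-p-2q)(2x-p-2q-1)^2(2x-p-2q-2)}.$$ *)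

theory Defs
  imports Complex_Main "HOL-Combinatorics.Permutations"
begin

definition Ccoef :: "real \<Rightarrow> real \<Rightarrow> nat \<Rightarrow> nat \<Rightarrow> real" where
  "Ccoef p q l i =
     (if i = l then 1
      else 4 ^ (l - i) * (\<Prod>r\<in>{i+1..l}. real r) / fact (l - i)
           * (\<Prod>r\<in>{i+1..l}. real r - p - q - 1/2)
           / (\<Prod>r\<in>{l+i..2*l-1}. real r - p - 2*q))"

definition fJ :: "real \<Rightarrow> real \<Rightarrow> nat \<Rightarrow> real \<Rightarrow> real" where
  "fJ p q l z = (\<Sum>i=0..l. Ccoef p q l i * (z - 2) ^ i)"

definition aJ :: "real \<Rightarrow> real \<Rightarrow> real \<Rightarrow> real" where
  "aJ p q x = - (2 * p * (p + 2*q + 1)) / ((2*x - p - 2*q - 1) * (2*x - p - 2*q + 1))"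

definition bJ :: "real \<Rightarrow> real \<Rightarrow> real \<Rightarrow> real" where
  "bJ p q x = (2*x * (2*x - 2*q - 1) * (2*x - 2*p - 2*q - 1) * (2*x - 2*p - 4*q - 2))
              / ((2*x - p - 2*q) * (2*x - p - 2*q - 1)^2 * (2*x - p - 2*q - 2))"

definition Delta :: "nat \<Rightarrow> (nat \<Rightarrow> real) \<Rightarrow> real" where
  "Delta m u = (\<Prod>i\<in>{1..m}. \<Prod>j\<in>{i+1..m}. u i - u j)"

text \<open>A partition with at most m parts: lam 1 \<ge> lam 2 \<ge> ... \<ge> lam m \<ge> 0
  (only the values on {1..m} are relevant).\<close>
definition is_partition :: "nat \<Rightarrow> (nat \<Rightarrow> nat) \<Rightarrow> bool" where
  "is_partition m lam \<longleftrightarrow> (\<forall>i j. 1 \<le> i \<and> i \<le> j \<and> j \<le> m \<longrightarrow> lam j \<le> lam i)"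

definition plen :: "nat \<Rightarrow> (nat \<Rightarrow> nat) \<Rightarrow> nat" where
  "plen m lam = card {i\<in>{1..m}. lam i \<noteq> 0}"

definition Jpol :: "real \<Rightarrow> real \<Rightarrow> nat \<Rightarrow> (nat \<Rightarrow> nat) \<Rightarrow> (nat \<Rightarrow> real) \<Rightarrow> real" where
  "Jpol p q m lam u =
     (1 / Delta m u) *
     (\<Sum>w | w permutes {1..m}. of_int (sign w) * (\<Prod>i\<in>{1..m}. fJ p q (lam i + m - i) (u (w i))))"

end

theory Submission
  imports Defs
begin

definition alt :: "nat \<Rightarrow> (nat \<Rightarrow> real \<Rightarrow> real) \<Rightarrow> (nat \<Rightarrow> real) \<Rightarrow> real" where
  "alt m g u = (\<Sum>w | w permutes {1..m}. of_int (sign w) * (\<Prod>i\<in>{1..m}. g i (u (w i))))"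

lemma alt_expand:
  assumes j: "j \<in> {1..m}"
  shows "alt m (g(j := h)) u =
    (\<Sum>w | w permutes {1..m}. of_int (sign w) * h (u (w j)) * (\<Prod>i\<in>{1..m}-{j}. g i (u (w i))))"
  unfolding alt_def
proof (rule sum.cong[OF refl])
  fix w
  have "(\<Prod>i\<in>{1..m}. (g(j := h)) i (u (w i))) = (g(j := h)) j (u (w j)) * (\<Prod>i\<in>{1..m}-{j}. (g(j := h)) i (u (w i)))"
    using j by (simp add: prod.remove)
  also have "(\<Prod>i\<in>{1..m}-{j}. (g(j := h)) i (u (w i))) = (\<Prod>i\<in>{1..m}-{j}. g i (u (w i)))"
    by (rule prod.cong) auto
  finally show "of_int (sign w) * (\<Prod>i\<in>{1..m}. (g(j := h)) i (u (w i))) =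
    of_int (sign w) * h (u (w j)) * (\<Prod>i\<in>{1..m}-{j}. g i (u (w i)))" by simp
qed

lemma alt_self: "j \<in> {1..m} \<Longrightarrow> alt m g u = alt m (g(j := g j)) u"
  by simp

lemma alt_add:
  assumes j: "j \<in> {1..m}"
  shows "alt m (g(j := (\<lambda>z. h1 z + h2 z))) u = alt m (g(j := h1)) u + alt m (g(j := h2)) u"
  unfolding alt_expand[OF j] by (simp add: sum.distrib[symmetric] algebra_simps)

lemma alt_smult:
  assumes j: "j \<in> {1..m}"
  shows "alt m (g(j := (\<lambda>z. c * h z))) u = c * alt m (g(j := h)) u"
  unfolding alt_expand[OF j] by (simp add: sum_distrib_left algebra_simps)

lemma alt_zero:
  assumes i: "i \<in> {1..m}" and j: "j \<in> {1..m}" and ij: "i \<noteq> j" and eq: "g i = g j"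
  shows "alt m g u = 0"
proof -
  let ?t = "transpose i j"
  have tp: "?t permutes {1..m}" using i j by (rule permutes_swap_id)
  have "alt m g u = (\<Sum>w | w permutes {1..m}. of_int (sign (w \<circ> ?t)) * (\<Prod>k\<in>{1..m}. g k (u ((w \<circ> ?t) k))))"
    unfolding alt_def by (rule sum_permutations_compose_right[OF tp])
  also have "\<dots> = (\<Sum>w | w permutes {1..m}. - (of_int (sign w) * (\<Prod>k\<in>{1..m}. g k (u (w k)))))"
  proof (rule sum.cong[OF refl])
    fix w assume "w \<in> {w. w permutes {1..m}}"
    then have w: "w permutes {1..m}" by simp
    have pw: "permutation w" using w permutation_permutes by blast
    have pt: "permutation ?t" using tp permutation_permutes by blast
    have s: "sign (w \<circ> ?t) = - sign w"
      using sign_compose[OF pw pt] ij by (simp add: sign_swap_id)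
    have "(\<Prod>k\<in>{1..m}. g (?t k) (u (w k))) = (\<Prod>k\<in>{1..m}. ((\<lambda>k. g (?t k) (u (w k))) \<circ> ?t) k)"
      by (rule prod.permute[OF tp])
    also have "\<dots> = (\<Prod>k\<in>{1..m}. g k (u ((w \<circ> ?t) k)))"
      by (simp add: o_def)
    finally have p1: "(\<Prod>k\<in>{1..m}. g k (u ((w \<circ> ?t) k))) = (\<Prod>k\<in>{1..m}. g (?t k) (u (w k)))" by simp
    have gt: "\<And>k. g (?t k) = g k" using eq by (auto simp: transpose_def)
    show "of_int (sign (w \<circ> ?t)) * (\<Prod>k\<in>{1..m}. g k (u ((w \<circ> ?t) k))) =
        - (of_int (sign w) * (\<Prod>k\<in>{1..m}. g k (u (w k))))"
      unfolding p1 s gt by simp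
  qed
  also have "\<dots> = - alt m g u" unfolding alt_def by (simp add: sum_negf)
  finally show ?thesis by simp
qed

lemma alt_mult_sum:
  "(\<Sum>i=1..m. u i) * alt m g u = (\<Sum>j=1..m. alt m (g(j := (\<lambda>z. z * g j z))) u)"
proof -
  have "(\<Sum>j=1..m. alt m (g(j := (\<lambda>z. z * g j z))) u) =
     (\<Sum>j=1..m. \<Sum>w | w permutes {1..m}. of_int (sign w) * (u (w j) * g j (u (w j))) * (\<Prod>i\<in>{1..m}-{j}. g i (u (w i))))"
    by (rule sum.cong[OF refl]) (rule alt_expand, simp)
  also have "\<dots> = (\<Sum>w | w permutes {1..m}. \<Sum>j=1..m. of_int (sign w) * (u (w j) * g j (u (w j))) * (\<Prod>i\<in>{1..m}-{j}. g i (u (w i))))"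
    by (rule sum.swap)
  also have "\<dots> = (\<Sum>w | w permutes {1..m}. of_int (sign w) * (\<Sum>j=1..m. u (w j)) * (\<Prod>i\<in>{1..m}. g i (u (w i))))"
  proof (rule sum.cong[OF refl])
    fix w
    have "\<And>j. j \<in> {1..m} \<Longrightarrow> of_int (sign w) * (u (w j) * g j (u (w j))) * (\<Prod>i\<in>{1..m}-{j}. g i (u (w i)))
        = of_int (sign w) * u (w j) * (\<Prod>i\<in>{1..m}. g i (u (w i)))"
      by (simp add: prod.remove)
    then have "(\<Sum>j=1..m. of_int (sign w) * (u (w j) * g j (u (w j))) * (\<Prod>i\<in>{1..m}-{j}. g i (u (w i)))) =
      (\<Sum>j=1..m. of_int (sign w) * u (w j) * (\<Prod>i\<in>{1..m}. g i (u (w i))))"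
      by (intro sum.cong) auto
    then show "(\<Sum>j=1..m. of_int (sign w) * (u (w j) * g j (u (w j))) * (\<Prod>i\<in>{1..m}-{j}. g i (u (w i)))) =
      of_int (sign w) * (\<Sum>j=1..m. u (w j)) * (\<Prod>i\<in>{1..m}. g i (u (w i)))"
      by (simp add: sum_distrib_left sum_distrib_right)
  qed
  also have "\<dots> = (\<Sum>w | w permutes {1..m}. of_int (sign w) * (\<Sum>j=1..m. u j) * (\<Prod>i\<in>{1..m}. g i (u (w i))))"
  proof (rule sum.cong[OF refl])
    fix w assume "w \<in> {w. w permutes {1..m}}"
    then have w: "w permutes {1..m}" by simp
    have "(\<Sum>j=1..m. u (w j)) = (\<Sum>j=1..m. u j)"
      using sum.permute[OF w, of u] by (simp add: o_def)
    then show "of_int (sign w) * (\<Sum>j=1..m. u (w j)) * (\<Prod>i\<in>{1..m}. g i (u (w i))) =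
      of_int (sign w) * (\<Sum>j=1..m. u j) * (\<Prod>i\<in>{1..m}. g i (u (w i)))" by simp
  qed
  also have "\<dots> = (\<Sum>w | w permutes {1..m}. (\<Sum>j=1..m. u j) * (of_int (sign w) * (\<Prod>i\<in>{1..m}. g i (u (w i)))))"
    by (rule sum.cong[OF refl]) (simp only: mult_ac)
  also have "\<dots> = (\<Sum>i=1..m. u i) * alt m g u"
    unfolding alt_def by (rule sum_distrib_left[symmetric])
  finally show ?thesis by simp
qed

definition Pn :: "real \<Rightarrow> nat \<Rightarrow> real" where "Pn x d = (\<Prod>k<d. x + real k)"

lemma Pn_0[simp]: "Pn x 0 = 1" by (simp add: Pn_def)
lemma Pn_Suc: "Pn x (Suc d) = Pn x d * (x + real d)" by (simp add: Pn_def)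
lemma Pn_Suc': "Pn x (Suc d) = x * Pn (x+1) d"
  unfolding Pn_def prod.lessThan_Suc_shift by (simp add: algebra_simps)

lemma nzI: "p + 2*q \<notin> \<int> \<Longrightarrow> (c::real) \<in> \<int> \<Longrightarrow> c - (p+2*q) \<noteq> 0"
  by auto

lemma Pn_nz:
  assumes "p + 2*q \<notin> \<int>" "(c::real) \<in> \<int>"
  shows "Pn (c - (p+2*q)) d \<noteq> 0"
proof -
  have "\<And>k. c - (p+2*q) + real k \<noteq> 0"
  proof -
    fix k
    have "c + real k \<in> \<int>" using assms(2) by (simp add: Ints_add)
    then have "c + real k - (p+2*q) \<noteq> 0" using nzI[OF assms(1)] by blast
    then show "c - (p+2*q) + real k \<noteq> 0" by (simp add: algebra_simps)
  qed
  then show ?thesis unfolding Pn_def by (simp add: prod_zero_iff)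
qed

lemma prod_shift: "(\<Prod>r\<in>{a..<a+d}. f r) = (\<Prod>k<d. f (a+k))" for a d :: nat
  by (induction d) (simp_all add: atLeastLessThanSuc mult.commute)

definition G :: "real \<Rightarrow> real \<Rightarrow> nat \<Rightarrow> nat \<Rightarrow> real" where
  "G p q i d = 4^d * Pn (real i + 1) d / fact d * Pn (real i + 1 - (p+q+1/2)) d
      / Pn (2*real i + real d - (p+2*q)) d"

lemma Ccoef_G:
  assumes "i \<le> l"
  shows "Ccoef p q l i = G p q i (l - i)"
proof (cases "i = l")
  case True then show ?thesis by (simp add: Ccoef_def G_def)
next
  case False
  define d where "d = l - i"
  have l: "l = i + d" and d1: "d \<ge> 1" using assms False unfolding d_def by auto
  have s1: "{i+1..l} = {i+1..<(i+1)+d}" using l by auto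
  have s2: "{l+i..2*l-1} = {(2*i+d)..<(2*i+d)+d}" using l d1 by auto
  have p1: "(\<Prod>r\<in>{i+1..l}. real r) = Pn (real i + 1) d"
    unfolding s1 prod_shift Pn_def by (simp add: algebra_simps)
  have p2: "(\<Prod>r\<in>{i+1..l}. real r - p - q - 1/2) = Pn (real i + 1 - (p+q+1/2)) d"
    unfolding s1 prod_shift Pn_def by (rule prod.cong) (simp_all add: algebra_simps)
  have p3: "(\<Prod>r\<in>{l+i..2*l-1}. real r - p - 2*q) = Pn (2*real i + real d - (p+2*q)) d"
    unfolding s2 prod_shift Pn_def by (rule prod.cong) (simp_all add: algebra_simps)
  show ?thesis
    unfolding Ccoef_def G_def using False p1 p2 p3 by (simp add: d_def)
qed

lemma ratcore:
  fixes X1 X2 X3 Nb a d0 d1 d2 d3 Y1 Y2 :: real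
  assumes nz: "d0 \<noteq> 0" "d1 \<noteq> 0" "d2 \<noteq> 0" "d3 \<noteq> 0" "Y1 \<noteq> 0" "Y2 \<noteq> 0"
    and P: "X1*(d1*d2*d3) + 2*(X2*(Y2*d1*d2*d3)) - a*X2*(Y2*d2) - Nb*(Y1*Y2*d3) = X3*d1"
  shows "X1/(Y1*Y2*d0*d1) + 2*(X2/(Y1*d0*d1)) - a/(d1*d3)*(X2/(Y1*d0*d1)) - Nb/(d2*d1*d1*d0)
     = X3/(Y1*Y2*d0*d1*d2*d3)"
proof -
  have "X1/(Y1*Y2*d0*d1) + 2*(X2/(Y1*d0*d1)) - a/(d1*d3)*(X2/(Y1*d0*d1)) - Nb/(d2*d1*d1*d0)
     = (X1*(d1*d2*d3) + 2*(X2*(Y2*d1*d2*d3)) - a*X2*(Y2*d2) - Nb*(Y1*Y2*d3)) / (Y1*Y2*d0*d1*d1*d2*d3)"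
    using nz by (simp add: field_simps)
  also have "\<dots> = X3/(Y1*Y2*d0*d1*d2*d3)" unfolding P using nz by (simp add: field_simps)
  finally show ?thesis .
qed

lemma absG1:
  fixes c4 P1 Ff P2 P3 c A F N D v w z y d0 d1 :: real
  assumes "P1 = A*v" "Ff = (y+1)*F" "P2 = N*w" "z*P3 = D*d0*d1" "c4 = 4*c"
    and nz: "F \<noteq> 0" "D \<noteq> 0" "y+1 \<noteq> 0" "d0 \<noteq> 0" "d1 \<noteq> 0" "z \<noteq> 0"
  shows "c4*P1/Ff*P2/P3 = (c*A/F*N/D)*((4*v*w*z)/((y+1)*d0*d1))"
proof -
  have P3: "P3 = D*d0*d1/z" using assms(4) nz by (simp add: field_simps)
  show ?thesis unfolding assms(1,2,3,5) P3 using nz by (simp add: field_simps)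
qed

lemma absG2:
  fixes c4 P1 Ff P2 P3 c A F N D v v' w w' z z' y d0 d1 d2 d3 :: real
  assumes "P1 = A*v*v'" "Ff = (y+1)*(y+2)*F" "P2 = N*w*w'" "z*z'*P3 = D*d0*d1*d2*d3" "c4 = 16*c"
    and nz: "F \<noteq> 0" "D \<noteq> 0" "y+1 \<noteq> 0" "y+2 \<noteq> 0" "d0 \<noteq> 0" "d1 \<noteq> 0" "d2 \<noteq> 0" "d3 \<noteq> 0" "z \<noteq> 0" "z' \<noteq> 0"
  shows "c4*P1/Ff*P2/P3 = (c*A/F*N/D)*((16*v*v'*w*w'*(z*z'))/((y+1)*(y+2)*d0*d1*d2*d3))"
proof -
  have P3: "P3 = D*d0*d1*d2*d3/(z*z')" using assms(4) nz by (simp add: field_simps)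
  show ?thesis unfolding assms(1,2,3,5) P3 using nz by (simp add: field_simps)
qed

lemma absGs:
  fixes c4 P1 Ff P2 P3 c A F N D x xs v w y d0 d1 :: real
  assumes "P1 = x*A*v" "Ff = (y+1)*(y+2)*F" "P2 = xs*N*w" "P3 = D*d0*d1" "c4 = 16*c"
    and nz: "F \<noteq> 0" "D \<noteq> 0" "y+1 \<noteq> 0" "y+2 \<noteq> 0" "d0 \<noteq> 0" "d1 \<noteq> 0"
  shows "c4*P1/Ff*P2/P3 = (c*A/F*N/D)*((16*x*v*xs*w)/((y+1)*(y+2)*d0*d1))"
  using assms by (simp add: field_simps)

lemma Ints_of_nat_expr: "2*real i + real e + (k::nat) \<in> \<int>" by (simp add: Ints_add Ints_mult)

lemma G1:
  assumes gen: "p + 2*q \<notin> \<int>"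
  shows "G p q i (Suc e) = G p q i e *
     ((4*(real i + 1 + real e)*(real i + 1 - (p+q+1/2) + real e)*(2*real i + real e - (p+2*q)))
      / ((real e+1)*(2*real i+2*real e-(p+2*q))*(2*real i+2*real e+1-(p+2*q))))"
proof -
  define z where "z = 2*real i+real e-(p+2*q)"
  have z0: "z \<noteq> 0" unfolding z_def by (rule nzI[OF gen]) (simp add: Ints_add Ints_mult)
  have D0: "Pn z e \<noteq> 0" unfolding z_def by (rule Pn_nz[OF gen]) (simp add: Ints_add Ints_mult)
  have n0: "2*real i+2*real e-(p+2*q) \<noteq> 0" by (rule nzI[OF gen]) (simp add: Ints_add Ints_mult)
  have n1: "2*real i+2*real e+1-(p+2*q) \<noteq> 0" by (rule nzI[OF gen]) (simp add: Ints_add Ints_mult)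
  have e3: "z * Pn (2 * real i + real (Suc e) - (p + 2 * q)) (Suc e) =
      Pn z e * (2*real i+2*real e-(p+2*q)) * (2*real i+2*real e+1-(p+2*q))"
  proof -
    have "Pn (2 * real i + real (Suc e) - (p + 2 * q)) (Suc e) = Pn (z+1) (Suc e)"
      by (rule arg_cong[where f="\<lambda>a. Pn a (Suc e)"]) (simp add: z_def)
    also have "z * \<dots> = Pn z (Suc (Suc e))" by (simp only: Pn_Suc')
    also have "\<dots> = Pn z e * (z + real e) * (z + real (Suc e))" by (simp only: Pn_Suc)
    also have "\<dots> = Pn z e * (2*real i+2*real e-(p+2*q)) * (2*real i+2*real e+1-(p+2*q))"
      by (simp add: z_def algebra_simps)
    finally show ?thesis by simp
  qed
  show ?thesis
    unfolding G_def z_def[symmetric]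
    apply (rule absG1)
    using e3 z0 D0 n0 n1 by (simp_all add: Pn_Suc algebra_simps)
qed

lemma G2:
  assumes gen: "p + 2*q \<notin> \<int>"
  shows "G p q i (Suc (Suc e)) = G p q i e *
     ((16*(real i + 1 + real e)*(real i + 1 + real e + 1)*(real i + 1 - (p+q+1/2) + real e)*(real i + 1 - (p+q+1/2) + real e + 1)
        *((2*real i + real e - (p+2*q))*(2*real i + real e - (p+2*q) + 1)))
      / ((real e+1)*(real e+2)*(2*real i+2*real e-(p+2*q))*(2*real i+2*real e+1-(p+2*q))
         *(2*real i+2*real e+2-(p+2*q))*(2*real i+2*real e+3-(p+2*q))))"
proof -
  define z where "z = 2*real i+real e-(p+2*q)"
  have z0: "z \<noteq> 0" unfolding z_def by (rule nzI[OF gen]) (simp add: Ints_add Ints_mult)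
  have z1: "z + 1 \<noteq> 0" unfolding z_def using nzI[OF gen, of "2*real i+real e + 1"]
    by (simp add: Ints_add Ints_mult algebra_simps)
  have D0: "Pn z e \<noteq> 0" unfolding z_def by (rule Pn_nz[OF gen]) (simp add: Ints_add Ints_mult)
  have n0: "2*real i+2*real e-(p+2*q) \<noteq> 0" by (rule nzI[OF gen]) (simp add: Ints_add Ints_mult)
  have n1: "2*real i+2*real e+1-(p+2*q) \<noteq> 0" by (rule nzI[OF gen]) (simp add: Ints_add Ints_mult)
  have n2: "2*real i+2*real e+2-(p+2*q) \<noteq> 0" by (rule nzI[OF gen]) (simp add: Ints_add Ints_mult)
  have n3: "2*real i+2*real e+3-(p+2*q) \<noteq> 0" by (rule nzI[OF gen]) (simp add: Ints_add Ints_mult)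
  have e3: "z * (z+1) * Pn (2 * real i + real (Suc (Suc e)) - (p + 2 * q)) (Suc (Suc e)) =
      Pn z e * (2*real i+2*real e-(p+2*q)) * (2*real i+2*real e+1-(p+2*q))
        * (2*real i+2*real e+2-(p+2*q)) * (2*real i+2*real e+3-(p+2*q))"
  proof -
    have "Pn (2 * real i + real (Suc (Suc e)) - (p + 2 * q)) (Suc (Suc e)) = Pn (z+1+1) (Suc (Suc e))"
      by (rule arg_cong[where f="\<lambda>a. Pn a (Suc (Suc e))"]) (simp add: z_def)
    then have "z * (z+1) * Pn (2 * real i + real (Suc (Suc e)) - (p + 2 * q)) (Suc (Suc e))
       = z * ((z+1) * Pn (z+1+1) (Suc (Suc e)))" by simp
    also have "\<dots> = Pn z (Suc (Suc (Suc (Suc e))))"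
      by (simp only: Pn_Suc'[of z "Suc (Suc (Suc e))"] Pn_Suc'[of "z+1" "Suc (Suc e)"])
    also have "\<dots> = Pn z e * (z + real e) * (z + real (Suc e)) * (z + real (Suc (Suc e))) * (z + real (Suc (Suc (Suc e))))"
      by (simp only: Pn_Suc)
    also have "\<dots> = Pn z e * (2*real i+2*real e-(p+2*q)) * (2*real i+2*real e+1-(p+2*q))
        * (2*real i+2*real e+2-(p+2*q)) * (2*real i+2*real e+3-(p+2*q))"
      by (simp add: z_def algebra_simps)
    finally show ?thesis .
  qed
  have ff: "fact (Suc (Suc e)) = (real e + 1) * (real e + 2) * (fact e :: real)"
    by (simp add: algebra_simps)
  show ?thesis
    unfolding G_def z_def[symmetric]
    apply (rule absG2)
    using e3 z0 z1 D0 n0 n1 n2 n3 ff by (simp_all add: Pn_Suc algebra_simps)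
qed

lemma Gs:
  assumes gen: "p + 2*q \<notin> \<int>" and ij: "i = Suc j"
  shows "G p q j (Suc (Suc e)) = G p q i e *
     ((16*real i*(real i + 1 + real e)*(real i - (p+q+1/2))*(real i + 1 - (p+q+1/2) + real e))
      / ((real e+1)*(real e+2)*(2*real i+2*real e-(p+2*q))*(2*real i+2*real e+1-(p+2*q))))"
proof -
  define z where "z = 2*real i+real e-(p+2*q)"
  have D0: "Pn z e \<noteq> 0" unfolding z_def by (rule Pn_nz[OF gen]) (simp add: Ints_add Ints_mult)
  have n0: "2*real i+2*real e-(p+2*q) \<noteq> 0" by (rule nzI[OF gen]) (simp add: Ints_add Ints_mult)
  have n1: "2*real i+2*real e+1-(p+2*q) \<noteq> 0" by (rule nzI[OF gen]) (simp add: Ints_add Ints_mult)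
  have a1: "Pn (real j + 1) (Suc (Suc e)) = real i * Pn (real i + 1) e * (real i + 1 + real e)"
  proof -
    have "Pn (real j + 1) (Suc (Suc e)) = Pn (real i) (Suc (Suc e))"
      by (rule arg_cong[where f="\<lambda>a. Pn a (Suc (Suc e))"]) (simp add: ij)
    also have "\<dots> = real i * (Pn (real i + 1) e * (real i + 1 + real e))"
      by (simp only: Pn_Suc'[of "real i" "Suc e"] Pn_Suc[of "real i + 1" e])
    finally show ?thesis by simp
  qed
  have a2: "Pn (real j + 1 - (p+q+1/2)) (Suc (Suc e)) = (real i - (p+q+1/2)) * Pn (real i + 1 - (p+q+1/2)) e * (real i + 1 - (p+q+1/2) + real e)"
  proof -
    have "Pn (real j + 1 - (p+q+1/2)) (Suc (Suc e)) = Pn (real i - (p+q+1/2)) (Suc (Suc e))"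
      by (rule arg_cong[where f="\<lambda>a. Pn a (Suc (Suc e))"]) (simp add: ij)
    also have "\<dots> = (real i - (p+q+1/2)) * (Pn (real i - (p+q+1/2) + 1) e * (real i - (p+q+1/2) + 1 + real e))"
      by (simp only: Pn_Suc'[of "real i - (p+q+1/2)" "Suc e"] Pn_Suc[of "real i - (p+q+1/2) + 1" e])
    also have "real i - (p+q+1/2) + 1 = real i + 1 - (p+q+1/2)" by simp
    finally show ?thesis by simp
  qed
  have a3: "Pn (2 * real j + real (Suc (Suc e)) - (p + 2 * q)) (Suc (Suc e)) =
      Pn z e * (2*real i+2*real e-(p+2*q)) * (2*real i+2*real e+1-(p+2*q))"
  proof -
    have "Pn (2 * real j + real (Suc (Suc e)) - (p + 2 * q)) (Suc (Suc e)) = Pn z (Suc (Suc e))"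
      by (rule arg_cong[where f="\<lambda>a. Pn a (Suc (Suc e))"]) (simp add: z_def ij)
    also have "\<dots> = Pn z e * (z + real e) * (z + real (Suc e))" by (simp only: Pn_Suc)
    also have "\<dots> = Pn z e * (2*real i+2*real e-(p+2*q)) * (2*real i+2*real e+1-(p+2*q))"
      by (simp add: z_def algebra_simps)
    finally show ?thesis .
  qed
  have ff: "fact (Suc (Suc e)) = (real e + 1) * (real e + 2) * (fact e :: real)"
    by (simp add: algebra_simps)
  show ?thesis
    unfolding G_def z_def[symmetric]
    apply (rule absGs)
    using a1 a2 a3 D0 n0 n1 ff by (simp_all add: algebra_simps)
qed

lemma lin4: "r1 + 2*r2 - A*r2 - B = r3 \<Longrightarrow> K*r1 + 2*(K*r2) = K*r3 + A*(K*r2) + B*(K::real)"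
proof -
  assume h: "r1 + 2*r2 - A*r2 - B = r3"
  have "K*r3 = K*(r1 + 2*r2 - A*r2 - B)" using h by simp
  then show ?thesis by (simp add: algebra_simps)
qed

lemma coef_mid:
  assumes gen: "p + 2*q \<notin> \<int>" and l: "l = i + e + 1"
  shows "(if i = 0 then 0 else Ccoef p q l (i-1)) + 2*Ccoef p q l i
     = Ccoef p q (l+1) i + aJ p q (real l) * Ccoef p q l i + bJ p q (real l) * Ccoef p q (l-1) i"
proof -
  define K where "K = G p q i e"
  have c0: "Ccoef p q (l-1) i = K" unfolding K_def using Ccoef_G[of i "l-1"] l by simp
  have c1: "Ccoef p q l i = G p q i (Suc e)" using Ccoef_G[of i l] l by simp
  have c2: "Ccoef p q (l+1) i = G p q i (Suc (Suc e))" using Ccoef_G[of i "l+1"] l by simp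
  have cs: "(if i = 0 then 0 else Ccoef p q l (i-1)) = K *
     ((16*real i*(real i + 1 + real e)*(real i - (p+q+1/2))*(real i + 1 - (p+q+1/2) + real e))
      / ((real e+1)*(real e+2)*(2*real i+2*real e-(p+2*q))*(2*real i+2*real e+1-(p+2*q))))"
  proof (cases i)
    case 0 then show ?thesis by simp
  next
    case (Suc j)
    have "Ccoef p q l (i-1) = G p q j (Suc (Suc e))" using Ccoef_G[of j l] l Suc by simp
    then show ?thesis unfolding K_def using Gs[OF gen Suc] Suc by simp
  qed
  define d0 where "d0 = 2*real i+2*real e-(p+2*q)"
  define d1 where "d1 = 2*real i+2*real e+1-(p+2*q)"
  define d2 where "d2 = 2*real i+2*real e+2-(p+2*q)"
  define d3 where "d3 = 2*real i+2*real e+3-(p+2*q)"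
  have n0: "d0 \<noteq> 0" unfolding d0_def by (rule nzI[OF gen]) (simp add: Ints_add Ints_mult)
  have n1: "d1 \<noteq> 0" unfolding d1_def by (rule nzI[OF gen]) (simp add: Ints_add Ints_mult)
  have n2: "d2 \<noteq> 0" unfolding d2_def by (rule nzI[OF gen]) (simp add: Ints_add Ints_mult)
  have n3: "d3 \<noteq> 0" unfolding d3_def by (rule nzI[OF gen]) (simp add: Ints_add Ints_mult)
  have rl: "real l = real i + real e + 1" using l by simp
  have A: "aJ p q (real l) = -(2*p*(p+2*q+1))/(d1*d3)"
  proof -
    have "(2 * real l - p - 2*q - 1) * (2 * real l - p - 2*q + 1) = d1*d3" unfolding d1_def d3_def rl by algebra
    then show ?thesis unfolding aJ_def by (simp add: algebra_simps)
  qed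
  define Nb where "Nb = 2*real l * (2*real l - 2*q - 1) * (2*real l - 2*p - 2*q - 1) * (2*real l - 2*p - 4*q - 2)"
  have B: "bJ p q (real l) = Nb/(d2*d1*d1*d0)"
  proof -
    have "(2 * real l - p - 2*q) * (2 * real l - p - 2*q - 1)^2 * (2 * real l - p - 2*q - 2) = d2*d1*d1*d0"
      unfolding d0_def d1_def d2_def rl by algebra
    then show ?thesis unfolding bJ_def Nb_def by simp
  qed
  have R: "(16*real i*(real i + 1 + real e)*(real i - (p+q+1/2))*(real i + 1 - (p+q+1/2) + real e))
      / ((real e+1)*(real e+2)*d0*d1)
     + 2 * ((4*(real i + 1 + real e)*(real i + 1 - (p+q+1/2) + real e)*(2*real i + real e - (p+2*q)))
      / ((real e+1)*d0*d1))
     - (-(2*p*(p+2*q+1)))/(d1*d3) * ((4*(real i + 1 + real e)*(real i + 1 - (p+q+1/2) + real e)*(2*real i + real e - (p+2*q)))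
      / ((real e+1)*d0*d1))
     - Nb/(d2*d1*d1*d0)
     = ((16*(real i + 1 + real e)*(real i + 1 + real e + 1)*(real i + 1 - (p+q+1/2) + real e)*(real i + 1 - (p+q+1/2) + real e + 1)
        *((2*real i + real e - (p+2*q))*(2*real i + real e - (p+2*q) + 1)))
      / ((real e+1)*(real e+2)*d0*d1*d2*d3))"
    apply (rule ratcore)
    using n0 n1 n2 n3 apply simp_all
    unfolding Nb_def rl d0_def d1_def d2_def d3_def by algebra
  show ?thesis
    unfolding cs c0 c1 c2 G1[OF gen, where i=i and e=e] G2[OF gen, where i=i and e=e] A B K_def[symmetric]
      d0_def[symmetric] d1_def[symmetric] d2_def[symmetric] d3_def[symmetric]
    by (rule lin4[OF R])
qed

definition Ce :: "real \<Rightarrow> real \<Rightarrow> nat \<Rightarrow> nat \<Rightarrow> real" where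
  "Ce p q l i = (if i \<le> l then Ccoef p q l i else 0)"

lemma G_one: "G p q x (Suc 0) = 4*(real x+1)*(real x+1-(p+q+1/2))/(2*real x + 1 - (p+2*q))"
  by (simp add: G_def Pn_def)

lemma bJ_0: "bJ p q 0 = 0" by (simp add: bJ_def)

lemma abs_top:
  fixes X Y a d1 d2 :: real
  assumes "d2 \<noteq> 0" "d1 \<noteq> 0" "X*d1 + 2*(d2*d1) = Y*d2 + a"
  shows "X/d2 + 2 = Y/d1 + a/(d2*d1)"
proof -
  have "X/d2 + 2 = (X*d1 + 2*(d2*d1))/(d2*d1)" using assms(1,2) by (simp add: field_simps)
  also have "\<dots> = (Y*d2 + a)/(d2*d1)" using assms(3) by simp
  also have "\<dots> = Y/d1 + a/(d2*d1)" using assms(1,2) by (simp add: field_simps)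
  finally show ?thesis .
qed

lemma coef_top:
  assumes gen: "p + 2*q \<notin> \<int>"
  shows "(if l = 0 then 0 else Ccoef p q l (l-1)) + 2 = Ccoef p q (l+1) l + aJ p q (real l)"
proof -
  have c2: "Ccoef p q (l+1) l = 4*(real l+1)*(real l+1-(p+q+1/2))/(2*real l + 1 - (p+2*q))"
    using Ccoef_G[of l "l+1"] G_one by simp
  have c1: "(if l = 0 then 0 else Ccoef p q l (l-1)) = 4*real l*(real l-(p+q+1/2))/(2*real l - 1 - (p+2*q))"
  proof (cases l)
    case 0 then show ?thesis by simp
  next
    case (Suc k)
    have "Ccoef p q l (l-1) = G p q k (Suc 0)" using Ccoef_G[of k l] Suc by simp
    then show ?thesis using Suc by (simp add: G_one algebra_simps)
  qed
  have n1: "2*real l + 1 - (p+2*q) \<noteq> 0" by (rule nzI[OF gen]) (simp add: Ints_add Ints_mult)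
  have n2: "2*real l - 1 - (p+2*q) \<noteq> 0" by (rule nzI[OF gen]) (simp add: Ints_add Ints_mult Ints_diff)
  have A: "aJ p q (real l) = -(2*p*(p+2*q+1))/((2*real l - 1 - (p+2*q))*(2*real l + 1 - (p+2*q)))"
  proof -
    have "(2 * real l - p - 2*q - 1) * (2 * real l - p - 2*q + 1) = (2*real l - 1 - (p+2*q))*(2*real l + 1 - (p+2*q))"
      by algebra
    then show ?thesis unfolding aJ_def by (simp add: algebra_simps)
  qed
  have P: "4*real l*(real l-(p+q+1/2)) * (2*real l + 1 - (p+2*q)) + 2*((2*real l - 1 - (p+2*q))*(2*real l + 1 - (p+2*q)))
     = 4*(real l+1)*(real l+1-(p+q+1/2)) * (2*real l - 1 - (p+2*q)) + -(2*p*(p+2*q+1))" by algebra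
  show ?thesis unfolding c1 c2 A by (rule abs_top[OF n2 n1 P])
qed

lemma coef_rec:
  assumes gen: "p + 2*q \<notin> \<int>" and il: "i \<le> l+1"
  shows "(if i = 0 then 0 else Ccoef p q l (i-1)) + 2*Ce p q l i
     = Ce p q (l+1) i + aJ p q (real l) * Ce p q l i + bJ p q (real l) * Ce p q (l-1) i"
proof -
  consider "i = l+1" | "i = l" | "i < l" using il by linarith
  then show ?thesis
  proof cases
    case 1
    have "\<not> (l+1 \<le> l - 1)" by arith
    then show ?thesis using 1 by (simp add: Ce_def Ccoef_def)
  next
    case 2
    have b: "bJ p q (real l) * Ce p q (l-1) i = 0"
      using 2 by (cases l) (simp_all add: Ce_def bJ_0)
    have e1: "Ce p q l i = 1" using 2 by (simp add: Ce_def Ccoef_def)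
    have e2: "Ce p q (l+1) i = Ccoef p q (l+1) l" using 2 by (simp add: Ce_def)
    have e3: "(if i = 0 then 0 else Ccoef p q l (i-1)) = (if l = 0 then 0 else Ccoef p q l (l-1))" using 2 by simp
    show ?thesis unfolding e1 e2 e3 b using coef_top[OF gen, of l] by simp
  next
    case 3
    then obtain e where l: "l = i + e + 1" by (metis add.commute add_Suc less_iff_Suc_add plus_1_eq_Suc)
    show ?thesis using coef_mid[OF gen l] 3 l by (simp add: Ce_def)
  qed
qed

lemma fJ_ext:
  assumes "l \<le> n"
  shows "fJ p q l z = (\<Sum>i=0..n. Ce p q l i * (z-2)^i)"
proof -
  have "(\<Sum>i=0..n. Ce p q l i * (z-2)^i) = (\<Sum>i=0..l. Ce p q l i * (z-2)^i)"
    by (rule sum.mono_neutral_right) (use assms in \<open>auto simp: Ce_def\<close>)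
  also have "\<dots> = fJ p q l z" unfolding fJ_def by (rule sum.cong) (auto simp: Ce_def)
  finally show ?thesis by simp
qed

lemma fJ_rec:
  assumes gen: "p + 2*q \<notin> \<int>"
  shows "z * fJ p q l z = fJ p q (l+1) z + aJ p q (real l) * fJ p q l z + bJ p q (real l) * fJ p q (l-1) z"
proof -
  define y where "y = z - 2"
  have "z * fJ p q l z = (\<Sum>i=0..l. Ccoef p q l i * y^(Suc i) + 2*(Ccoef p q l i * y^i))"
    unfolding fJ_def sum_distrib_left y_def by (rule sum.cong) (simp_all add: algebra_simps)
  also have "\<dots> = (\<Sum>i=0..l. Ccoef p q l i * y^(Suc i)) + 2 * fJ p q l z"
    unfolding fJ_def y_def by (simp add: sum.distrib sum_distrib_left)
  also have "(\<Sum>i=0..l. Ccoef p q l i * y^(Suc i)) = (\<Sum>i=0..l+1. (if i = 0 then 0 else Ccoef p q l (i-1)) * y^i)"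
    by (simp only: Suc_eq_plus1[symmetric] sum.atLeast0_atMost_Suc_shift) simp
  also have "2 * fJ p q l z = (\<Sum>i=0..l+1. 2 * Ce p q l i * y^i)"
  proof -
    have "fJ p q l z = (\<Sum>i=0..l+1. Ce p q l i * (z-2)^i)" by (rule fJ_ext) simp
    then show ?thesis unfolding y_def by (simp only: sum_distrib_left mult.assoc)
  qed
  also have "(\<Sum>i=0..l+1. (if i = 0 then 0 else Ccoef p q l (i-1)) * y^i) + (\<Sum>i=0..l+1. 2 * Ce p q l i * y^i)
     = (\<Sum>i=0..l+1. (Ce p q (l+1) i + aJ p q (real l) * Ce p q l i + bJ p q (real l) * Ce p q (l-1) i) * y^i)"
    unfolding sum.distrib[symmetric]
    by (rule sum.cong[OF refl]) (simp add: coef_rec[OF gen] distrib_right[symmetric])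
  also have "\<dots> = fJ p q (l+1) z + aJ p q (real l) * fJ p q l z + bJ p q (real l) * fJ p q (l-1) z"
  proof -
    have f1: "fJ p q (l+1) z = (\<Sum>i=0..l+1. Ce p q (l+1) i * y^i)" unfolding y_def by (rule fJ_ext) simp
    have f2: "fJ p q l z = (\<Sum>i=0..l+1. Ce p q l i * y^i)" unfolding y_def by (rule fJ_ext) simp
    have f3: "fJ p q (l-1) z = (\<Sum>i=0..l+1. Ce p q (l-1) i * y^i)" unfolding y_def by (rule fJ_ext) simp
    show ?thesis unfolding f1 f2 f3 sum_distrib_left sum.distrib[symmetric]
      by (rule sum.cong[OF refl]) (simp only: distrib_right mult.assoc)
  qed
  finally show ?thesis .
qed

lemma part_inc:
  assumes P: "is_partition m lam" and j: "1 \<le> j" "j \<le> m" and c: "j = 1 \<or> lam j < lam (j-1)"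
  shows "is_partition m (lam(j := lam j + 1))"
  unfolding is_partition_def
proof (intro allI impI)
  fix i i' assume h: "1 \<le> i \<and> i \<le> i' \<and> i' \<le> m"
  have Pi: "\<And>a b. 1 \<le> a \<Longrightarrow> a \<le> b \<Longrightarrow> b \<le> m \<Longrightarrow> lam b \<le> lam a" using P unfolding is_partition_def by blast
  show "(lam(j := lam j + 1)) i' \<le> (lam(j := lam j + 1)) i"
  proof (cases "i' = j")
    case True
    show ?thesis
    proof (cases "i = j")
      case False
      then have "i \<le> j - 1" "j \<noteq> 1" using h True by auto
      then have "lam (j-1) \<le> lam i" using Pi[of i "j-1"] h True by auto
      then show ?thesis using True False c \<open>j \<noteq> 1\<close> by auto
    qed (use True in simp)
  next
    case False
    show ?thesis
    proof (cases "i = j")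
      case True
      then show ?thesis using Pi[of i i'] h False by auto
    next
      case False2: False
      then show ?thesis using Pi[of i i'] h False by simp
    qed
  qed
qed

lemma part_dec:
  assumes P: "is_partition m lam" and j: "1 \<le> j" "j \<le> m" and l1: "lam j \<ge> 1" and c: "j = m \<or> lam (j+1) < lam j"
  shows "is_partition m (lam(j := lam j - 1))"
  unfolding is_partition_def
proof (intro allI impI)
  fix i i' assume h: "1 \<le> i \<and> i \<le> i' \<and> i' \<le> m"
  have Pi: "\<And>a b. 1 \<le> a \<Longrightarrow> a \<le> b \<Longrightarrow> b \<le> m \<Longrightarrow> lam b \<le> lam a" using P unfolding is_partition_def by blast
  show "(lam(j := lam j - 1)) i' \<le> (lam(j := lam j - 1)) i"
  proof (cases "i' = j")
    case True
    show ?thesis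
    proof (cases "i = j")
      case False
      then show ?thesis using Pi[of i j] h True by auto
    qed (use True in simp)
  next
    case False
    show ?thesis
    proof (cases "i = j")
      case True
      then have "j + 1 \<le> i'" "j \<noteq> m" using h False by auto
      then have "lam i' \<le> lam (j+1)" using Pi[of "j+1" i'] h by auto
      then show ?thesis using True False c \<open>j \<noteq> m\<close> by auto
    next
      case False2: False
      then show ?thesis using Pi[of i i'] h False by simp
    qed
  qed
qed

lemma plen_char:
  assumes P: "is_partition m lam"
  shows "plen m lam \<le> m \<and> (\<forall>i\<in>{1..m}. lam i \<noteq> 0 \<longleftrightarrow> i \<le> plen m lam)"
proof -
  define A where "A = {i\<in>{1..m}. lam i \<noteq> 0}"
  have Pi: "\<And>a b. 1 \<le> a \<Longrightarrow> a \<le> b \<Longrightarrow> b \<le> m \<Longrightarrow> lam b \<le> lam a" using P unfolding is_partition_def by blast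
  obtain L where AL: "A = {1..L}" and Lm: "L \<le> m"
  proof (cases "A = {}")
    case True then show ?thesis using that[of 0] by simp
  next
    case False
    have fin: "finite A" unfolding A_def by simp
    define L where "L = Max A"
    have LA: "L \<in> A" unfolding L_def using Max_in[OF fin False] .
    have "A = {1..L}"
    proof
      show "A \<subseteq> {1..L}" using Max_ge[OF fin] unfolding L_def A_def by auto
      show "{1..L} \<subseteq> A"
      proof
        fix i assume "i \<in> {1..L}"
        moreover have "lam L \<noteq> 0" "L \<le> m" using LA unfolding A_def by auto
        ultimately show "i \<in> A" unfolding A_def using Pi[of i L] by auto
      qed
    qed
    moreover have "L \<le> m" using LA unfolding A_def by auto
    ultimately show ?thesis using that by blast
  qed
  have pl: "plen m lam = L" unfolding plen_def A_def[symmetric] AL by simp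
  have mem: "lam i \<noteq> 0 \<longleftrightarrow> i \<le> L" if i: "i \<in> {1..m}" for i
  proof -
    have "lam i \<noteq> 0 \<longleftrightarrow> i \<in> A" using i unfolding A_def by simp
    also have "\<dots> \<longleftrightarrow> i \<in> {1..L}" unfolding AL ..
    also have "\<dots> \<longleftrightarrow> i \<le> L" using i by simp
    finally show ?thesis .
  qed
  show ?thesis unfolding pl using Lm mem by blast
qed

lemma aJ_tele:
  assumes gen: "p + 2*q \<notin> \<int>"
  shows "(\<Sum>k<n. aJ p q (real k)) = p + p*(p+2*q+1)/(2*real n - p - 2*q - 1)"
proof (induction n)
  case 0
  have "p + 2*q + 1 \<noteq> 0" using nzI[OF gen, of "-1"] by (simp add: algebra_simps)
  then show ?case by (simp add: field_simps)
next
  case (Suc n)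
  have n1: "2*real n - 1 - (p+2*q) \<noteq> 0" by (rule nzI[OF gen]) (simp add: Ints_add Ints_mult Ints_diff)
  have n2: "2*real n + 1 - (p+2*q) \<noteq> 0" by (rule nzI[OF gen]) (simp add: Ints_add Ints_mult)
  have n1': "2*real n - p - 2*q - 1 \<noteq> 0" using n1 by argo
  have n2': "2*real n - p - 2*q + 1 \<noteq> 0" using n2 by argo
  have n3: "2*real (Suc n) - p - 2*q - 1 \<noteq> 0" using n2' by (simp add: algebra_simps)
  have "(\<Sum>k<Suc n. aJ p q (real k)) = p + p*(p+2*q+1)/(2*real n - p - 2*q - 1) + aJ p q (real n)"
    using Suc by simp
  also have "\<dots> = p + p*(p+2*q+1)/(2*real (Suc n) - p - 2*q - 1)"
  proof -
    have e: "2*real (Suc n) - p - 2*q - 1 = 2*real n - p - 2*q + 1" by simp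
    define d1 where "d1 = 2*real n - p - 2*q - 1"
    define d2 where "d2 = 2*real n - p - 2*q + 1"
    define X where "X = p*(p+2*q+1)"
    have nz: "d1 \<noteq> 0" "d2 \<noteq> 0" using n1' n2' unfolding d1_def d2_def by auto
    have aJn: "aJ p q (real n) = -(2*X)/(d1*d2)" unfolding aJ_def X_def d1_def d2_def by (simp add: mult.assoc)
    have "X/d1 + -(2*X)/(d1*d2) = X*(d2-2)/(d1*d2)" using nz by (simp add: field_simps)
    also have "d2 - 2 = d1" unfolding d1_def d2_def by simp
    also have "X*d1/(d1*d2) = X/d2" using nz by simp
    finally have "X/d1 + -(2*X)/(d1*d2) = X/d2" .
    then show ?thesis unfolding aJn e d1_def[symmetric] d2_def[symmetric] X_def[symmetric] by simp
  qed
  finally show ?case .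
qed

theorem mainTheorem8:
  fixes p q :: real and m :: nat and lam :: "nat \<Rightarrow> nat" and u :: "nat \<Rightarrow> real"
  assumes "m \<ge> 1"
    and generic: "p + 2*q \<notin> \<int>"
    and "is_partition m lam"
    and "inj_on u {1..m}"
  shows "(\<Sum>i=1..m. u i) * Jpol p q m lam u =
           (\<Sum>i\<in>{i\<in>{1..m}. is_partition m (lam(i := lam i + 1))}.
               Jpol p q m (lam(i := lam i + 1)) u)
         + ((\<Sum>i=1..plen m lam. aJ p q (real (lam i + m - i))) + p
             + p * (p + 2*q + 1) / (2 * real m - 2 * real (plen m lam) - p - 2*q - 1))
           * Jpol p q m lam u
         + (\<Sum>i\<in>{i\<in>{1..m}. lam i \<ge> 1 \<and> is_partition m (lam(i := lam i - 1))}.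
               bJ p q (real (lam i + m - i)) * Jpol p q m (lam(i := lam i - 1)) u)"
proof -
  note P = assms(3)
  have Pi: "\<And>a b. 1 \<le> a \<Longrightarrow> a \<le> b \<Longrightarrow> b \<le> m \<Longrightarrow> lam b \<le> lam a" using P unfolding is_partition_def by blast
  define kk where "kk = (\<lambda>i. lam i + m - i)"
  define g where "g = (\<lambda>i. fJ p q (kk i))"
  define Jn where "Jn = (\<lambda>lam'. alt m (\<lambda>i. fJ p q (lam' i + m - i)) u)"
  define S1 where "S1 = {i\<in>{1..m}. is_partition m (lam(i := lam i + 1))}"
  define S3 where "S3 = {i\<in>{1..m}. lam i \<ge> 1 \<and> is_partition m (lam(i := lam i - 1))}"
  define AA where "AA = (\<Sum>i=1..plen m lam. aJ p q (real (lam i + m - i))) + p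
             + p * (p + 2*q + 1) / (2 * real m - 2 * real (plen m lam) - p - 2*q - 1)"
  have Jp: "\<And>lam'. Jpol p q m lam' u = 1/Delta m u * Jn lam'" unfolding Jpol_def Jn_def alt_def by simp
  have gJ: "alt m g u = Jn lam" unfolding g_def kk_def Jn_def ..
  have step: "alt m (g(j := (\<lambda>z. z * g j z))) u = alt m (g(j := fJ p q (kk j + 1))) u
      + aJ p q (real (kk j)) * alt m g u + bJ p q (real (kk j)) * alt m (g(j := fJ p q (kk j - 1))) u"
    if j: "j \<in> {1..m}" for j
  proof -
    have fe: "(\<lambda>z. z * g j z) = (\<lambda>z. fJ p q (kk j + 1) z + (aJ p q (real (kk j)) * fJ p q (kk j) z
        + bJ p q (real (kk j)) * fJ p q (kk j - 1) z))"
      by (rule ext) (simp add: g_def fJ_rec[OF generic])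
    have gg: "g(j := fJ p q (kk j)) = g" by (auto simp: g_def)
    show ?thesis
      unfolding fe alt_add[OF j, of g "fJ p q (kk j + 1)"]
        alt_add[OF j, of g "\<lambda>z. aJ p q (real (kk j)) * fJ p q (kk j) z"]
        alt_smult[OF j, of g "aJ p q (real (kk j))" "fJ p q (kk j)"]
        alt_smult[OF j, of g "bJ p q (real (kk j))" "fJ p q (kk j - 1)"] gg
      by simp
  qed
  have S: "(\<Sum>i=1..m. u i) * alt m g u = (\<Sum>j=1..m. alt m (g(j := fJ p q (kk j + 1))) u)
     + (\<Sum>j=1..m. aJ p q (real (kk j))) * alt m g u
     + (\<Sum>j=1..m. bJ p q (real (kk j)) * alt m (g(j := fJ p q (kk j - 1))) u)"
  proof -
    have "(\<Sum>i=1..m. u i) * alt m g u = (\<Sum>j=1..m. alt m (g(j := fJ p q (kk j + 1))) u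
      + aJ p q (real (kk j)) * alt m g u + bJ p q (real (kk j)) * alt m (g(j := fJ p q (kk j - 1))) u)"
      unfolding alt_mult_sum by (rule sum.cong[OF refl]) (rule step)
    then show ?thesis by (simp add: sum.distrib sum_distrib_right)
  qed
  have T1: "(\<Sum>j=1..m. alt m (g(j := fJ p q (kk j + 1))) u) = (\<Sum>j\<in>S1. Jn (lam(j := lam j + 1)))"
  proof -
    have "(\<Sum>j=1..m. alt m (g(j := fJ p q (kk j + 1))) u) = (\<Sum>j\<in>S1. alt m (g(j := fJ p q (kk j + 1))) u)"
    proof (rule sum.mono_neutral_right)
      show "finite {1..m}" by simp
      show "S1 \<subseteq> {1..m}" unfolding S1_def by auto
      show "\<forall>j\<in>{1..m} - S1. alt m (g(j := fJ p q (kk j + 1))) u = 0"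
      proof
        fix j assume "j \<in> {1..m} - S1"
        then have j: "1 \<le> j" "j \<le> m" and np: "\<not> is_partition m (lam(j := lam j + 1))" unfolding S1_def by auto
        have c: "\<not> (j = 1 \<or> lam j < lam (j-1))" using part_inc[OF P j] np by blast
        then have j2: "j \<ge> 2" using j by auto
        have eq: "lam (j-1) = lam j" using c Pi[of "j-1" j] j j2 by auto
        have kq: "kk (j-1) = kk j + 1" unfolding kk_def using j j2 eq by simp
        show "alt m (g(j := fJ p q (kk j + 1))) u = 0"
          by (rule alt_zero[of "j-1" m j]) (use j j2 kq in \<open>auto simp: g_def\<close>)
      qed
    qed
    also have "\<dots> = (\<Sum>j\<in>S1. Jn (lam(j := lam j + 1)))"
    proof (rule sum.cong[OF refl])
      fix j assume "j \<in> S1"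
      then have j: "j \<le> m" unfolding S1_def by auto
      have ar: "kk j + 1 = lam j + 1 + m - j" unfolding kk_def using j by arith
      have "g(j := fJ p q (kk j + 1)) = (\<lambda>i. fJ p q ((lam(j := lam j + 1)) i + m - i))"
      proof (rule ext)
        fix i show "(g(j := fJ p q (kk j + 1))) i = fJ p q ((lam(j := lam j + 1)) i + m - i)"
        proof (cases "i = j")
          case True show ?thesis unfolding True fun_upd_same ar by (rule refl)
        next
          case False then show ?thesis by (simp add: g_def kk_def)
        qed
      qed
      then show "alt m (g(j := fJ p q (kk j + 1))) u = Jn (lam(j := lam j + 1))" unfolding Jn_def by simp
    qed
    finally show ?thesis .
  qed
  have T3: "(\<Sum>j=1..m. bJ p q (real (kk j)) * alt m (g(j := fJ p q (kk j - 1))) u)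
      = (\<Sum>j\<in>S3. bJ p q (real (lam j + m - j)) * Jn (lam(j := lam j - 1)))"
  proof -
    have "(\<Sum>j=1..m. bJ p q (real (kk j)) * alt m (g(j := fJ p q (kk j - 1))) u)
        = (\<Sum>j\<in>S3. bJ p q (real (kk j)) * alt m (g(j := fJ p q (kk j - 1))) u)"
    proof (rule sum.mono_neutral_right)
      show "finite {1..m}" by simp
      show "S3 \<subseteq> {1..m}" unfolding S3_def by auto
      show "\<forall>j\<in>{1..m} - S3. bJ p q (real (kk j)) * alt m (g(j := fJ p q (kk j - 1))) u = 0"
      proof
        fix j assume "j \<in> {1..m} - S3"
        then have j: "1 \<le> j" "j \<le> m" and np: "\<not> (lam j \<ge> 1 \<and> is_partition m (lam(j := lam j - 1)))"
          unfolding S3_def by auto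
        show "bJ p q (real (kk j)) * alt m (g(j := fJ p q (kk j - 1))) u = 0"
        proof (cases "j = m")
          case True
          have "lam j = 0" using part_dec[OF P j] np True by auto
          then have "kk j = 0" unfolding kk_def using True by simp
          then show ?thesis by (simp add: bJ_0)
        next
          case False
          have "lam (j+1) \<le> lam j" using Pi[of j "j+1"] j False by auto
          moreover have "\<not> lam (j+1) < lam j"
          proof
            assume "lam (j+1) < lam j"
            then show False using part_dec[OF P j] np by auto
          qed
          ultimately have eq: "lam (j+1) = lam j" by simp
          have kq: "kk (j+1) = kk j - 1" unfolding kk_def using j False eq by simp
          have "alt m (g(j := fJ p q (kk j - 1))) u = 0"
            by (rule alt_zero[of j m "j+1"]) (use j False kq in \<open>auto simp: g_def\<close>)
          then show ?thesis by simp
        qed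
      qed
    qed
    also have "\<dots> = (\<Sum>j\<in>S3. bJ p q (real (lam j + m - j)) * Jn (lam(j := lam j - 1)))"
    proof (rule sum.cong[OF refl])
      fix j assume "j \<in> S3"
      then have j: "j \<le> m" "lam j \<ge> 1" unfolding S3_def by auto
      have ar: "kk j - 1 = lam j - 1 + m - j" unfolding kk_def using j by arith
      have "g(j := fJ p q (kk j - 1)) = (\<lambda>i. fJ p q ((lam(j := lam j - 1)) i + m - i))"
      proof (rule ext)
        fix i show "(g(j := fJ p q (kk j - 1))) i = fJ p q ((lam(j := lam j - 1)) i + m - i)"
        proof (cases "i = j")
          case True show ?thesis unfolding True fun_upd_same ar by (rule refl)
        next
          case False then show ?thesis by (simp add: g_def kk_def)
        qed
      qed
      then show "bJ p q (real (kk j)) * alt m (g(j := fJ p q (kk j - 1))) u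
          = bJ p q (real (lam j + m - j)) * Jn (lam(j := lam j - 1))" unfolding Jn_def kk_def by simp
    qed
    finally show ?thesis .
  qed
  have T2: "(\<Sum>j=1..m. aJ p q (real (kk j))) = AA"
  proof -
    define L where "L = plen m lam"
    have Lm: "L \<le> m" and Lc: "\<And>i. i \<in> {1..m} \<Longrightarrow> lam i \<noteq> 0 \<longleftrightarrow> i \<le> L"
      using plen_char[OF P] unfolding L_def by auto
    have split: "{1..m} = {1..L} \<union> {L+1..m}" using Lm by auto
    have "(\<Sum>j=1..m. aJ p q (real (kk j))) = (\<Sum>j=1..L. aJ p q (real (kk j))) + (\<Sum>j=L+1..m. aJ p q (real (kk j)))"
      unfolding split by (rule sum.union_disjoint) auto
    also have "(\<Sum>j=L+1..m. aJ p q (real (kk j))) = (\<Sum>j=L+1..m. aJ p q (real (m - j)))"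
    proof (rule sum.cong[OF refl])
      fix j assume "j \<in> {L+1..m}"
      then have "lam j = 0" using Lc[of j] by auto
      then show "aJ p q (real (kk j)) = aJ p q (real (m - j))" unfolding kk_def by simp
    qed
    also have "\<dots> = (\<Sum>k<m-L. aJ p q (real k))"
      by (rule sum.reindex_bij_witness[where i="\<lambda>k. m - k" and j="\<lambda>j. m - j"]) (use Lm in auto)
    also have "\<dots> = p + p*(p+2*q+1)/(2*real (m-L) - p - 2*q - 1)" by (rule aJ_tele[OF generic])
    also have "2*real (m-L) - p - 2*q - 1 = 2 * real m - 2 * real L - p - 2*q - 1" using Lm by simp
    finally show ?thesis unfolding AA_def L_def kk_def by simp
  qed
  have "(\<Sum>i=1..m. u i) * Jpol p q m lam u = 1/Delta m u * ((\<Sum>i=1..m. u i) * alt m g u)"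
    unfolding Jp gJ by simp
  also have "\<dots> = 1/Delta m u * ((\<Sum>j\<in>S1. Jn (lam(j := lam j + 1))) + AA * Jn lam
      + (\<Sum>j\<in>S3. bJ p q (real (lam j + m - j)) * Jn (lam(j := lam j - 1))))"
    unfolding S unfolding T1 T2 T3 gJ ..
  also have "\<dots> = (\<Sum>j\<in>S1. Jpol p q m (lam(j := lam j + 1)) u) + AA * Jpol p q m lam u
      + (\<Sum>j\<in>S3. bJ p q (real (lam j + m - j)) * Jpol p q m (lam(j := lam j - 1)) u)"
  proof -
    define c where "c = 1/Delta m u"
    have Jp': "\<And>lam'. Jpol p q m lam' u = c * Jn lam'" unfolding c_def by (rule Jp)
    have a: "c * ((\<Sum>j\<in>S1. Jn (lam(j := lam j + 1))) + AA * Jn lam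
      + (\<Sum>j\<in>S3. bJ p q (real (lam j + m - j)) * Jn (lam(j := lam j - 1))))
      = c * (\<Sum>j\<in>S1. Jn (lam(j := lam j + 1))) + AA * (c * Jn lam)
      + c * (\<Sum>j\<in>S3. bJ p q (real (lam j + m - j)) * Jn (lam(j := lam j - 1)))"
      by (simp add: algebra_simps)
    have d1: "c * (\<Sum>j\<in>S1. Jn (lam(j := lam j + 1))) = (\<Sum>j\<in>S1. c * Jn (lam(j := lam j + 1)))"
      by (rule sum_distrib_left)
    have d3: "c * (\<Sum>j\<in>S3. bJ p q (real (lam j + m - j)) * Jn (lam(j := lam j - 1)))
       = (\<Sum>j\<in>S3. bJ p q (real (lam j + m - j)) * (c * Jn (lam(j := lam j - 1))))"
      unfolding sum_distrib_left by (rule sum.cong[OF refl]) (rule mult.left_commute)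
    show ?thesis unfolding c_def[symmetric] Jp' a d1 d3 ..
  qed
  finally show ?thesis unfolding S1_def S3_def AA_def .
qed

end
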